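(* Consider a finite reward-free MDP with occupancy polytope $\Phi$ and fix $d_e^\star\in\Phi$. There exists a constant $C>0$, depending only on the reward-free MDP (with $d_e^\star$ fixed), such that for every dataset $\mathcal D=\{(d_e^k,\epsilon^k)\}_{k=1}^K$ ($d_e^k\in\Phi$, $\epsilon^k\ge0$) with $\mathcal R(\mathcal D)\neq\emptyset$, \[d_H\big(\mathcal R(\mathcal D)\mid\mathcal R(d_e^\star)\big)\le C\,\mathrm{Gap}\big(\mathcal R(\mathcal D),\mathcal R(d_e^\star)\big).\] In particular, $\mathrm{Gap}(\mathcal R(\mathcal D),\mathcal R(d_e^\star))\to0$ implies $d_H(\mathcal R(\mathcal D)\mid\mathcal R(d_e^\star))\to0$.
   Context: The MDP has finite $S$, $A$, transitions $P$, initial distribution $\mu_0$, discount $\gamma\in(0,1)$; $(Md)(s)=\sum_a d(s,a)-\gamma\sum_{s',a'}P(s\mid s',a')d(s',a')$ and $\Phi=\{d\ge0:Md=(1-\gamma)\mu_0\}$. Rewards are $r\in\Delta(S\times A)$. $\mathrm{subopt}(r,d):=\max_{\tilde d\in\Phi}r^\top\tilde d-r^\top d$. $\mathcal R(\mathcal D):=\{r\in\Delta(S\times A):\mathrm{subopt}(r,d_e^k)\le\epsilon^k\ \forall k\}$; $\mathcal R(d_e^\star):=\{r\in\Delta(S\times A):\mathrm{subopt}(r,d_e^\star)=0\}$. $\mathrm{Gap}(\mathcal R,\mathcal R(d_e^\star)):=\max_{r\in\mathcal R}\mathrm{subopt}(r,d_e^\star)$. For nonempty $A',B\subset\mathbb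 R^m$, $d_H(A'\mid B):=\sup_{x\in A'}\inf_{y\in B}\|x-y\|_\infty$. *)

theory Defs
  imports "HOL-Analysis.Analysis"
begin

text \<open>Occupancy measures and rewards are functions on the finite set S x A.
  The transition kernel is P (s',a') s = P(s | s',a').\<close>

definition flow_op :: "('s \<times> 'a \<Rightarrow> 's \<Rightarrow> real) \<Rightarrow> real \<Rightarrow> ('s::finite \<times> 'a::finite \<Rightarrow> real) \<Rightarrow> 's \<Rightarrow> real" where
  "flow_op P \<gamma> d s = (\<Sum>a\<in>UNIV. d (s, a)) - \<gamma> * (\<Sum>sa'\<in>UNIV. P sa' s * d sa')"

definition occupancy_set :: "('s \<times> 'a \<Rightarrow> 's \<Rightarrow> real) \<Rightarrow> real \<Rightarrow> ('s \<Rightarrow> real) \<Rightarrow> ('s::finite \<times> 'a::finite \<Rightarrow> real) set" where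
  "occupancy_set P \<gamma> \<mu>0 = {d. (\<forall>x. 0 \<le> d x) \<and> (\<forall>s. flow_op P \<gamma> d s = (1 - \<gamma>) * \<mu>0 s)}"

definition reward_simplex :: "('x::finite \<Rightarrow> real) set" where
  "reward_simplex = {r. (\<forall>x. 0 \<le> r x) \<and> (\<Sum>x\<in>UNIV. r x) = 1}"

definition ret :: "('x::finite \<Rightarrow> real) \<Rightarrow> ('x \<Rightarrow> real) \<Rightarrow> real" where
  "ret r d = (\<Sum>x\<in>UNIV. r x * d x)"

definition subopt :: "('s \<times> 'a \<Rightarrow> 's \<Rightarrow> real) \<Rightarrow> real \<Rightarrow> ('s \<Rightarrow> real) \<Rightarrow> ('s::finite \<times> 'a::finite \<Rightarrow> real) \<Rightarrow> ('s \<times> 'a \<Rightarrow> real) \<Rightarrow> real" where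
  "subopt P \<gamma> \<mu>0 r d = (SUP d'\<in>occupancy_set P \<gamma> \<mu>0. ret r d') - ret r d"

definition reward_set_data :: "('s \<times> 'a \<Rightarrow> 's \<Rightarrow> real) \<Rightarrow> real \<Rightarrow> ('s \<Rightarrow> real) \<Rightarrow> nat \<Rightarrow> (nat \<Rightarrow> ('s::finite \<times> 'a::finite \<Rightarrow> real)) \<Rightarrow> (nat \<Rightarrow> real) \<Rightarrow> ('s \<times> 'a \<Rightarrow> real) set" where
  "reward_set_data P \<gamma> \<mu>0 K de eps = {r \<in> reward_simplex. \<forall>k\<in>{1..K}. subopt P \<gamma> \<mu>0 r (de k) \<le> eps k}"

definition reward_set_expert :: "('s \<times> 'a \<Rightarrow> 's \<Rightarrow> real) \<Rightarrow> real \<Rightarrow> ('s \<Rightarrow> real) \<Rightarrow> ('s::finite \<times> 'a::finite \<Rightarrow> real) \<Rightarrow> ('s \<times> 'a \<Rightarrow> real) set" where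
  "reward_set_expert P \<gamma> \<mu>0 dstar = {r \<in> reward_simplex. subopt P \<gamma> \<mu>0 r dstar = 0}"

definition gap :: "('s \<times> 'a \<Rightarrow> 's \<Rightarrow> real) \<Rightarrow> real \<Rightarrow> ('s \<Rightarrow> real) \<Rightarrow> ('s::finite \<times> 'a::finite \<Rightarrow> real) set \<Rightarrow> ('s \<times> 'a \<Rightarrow> real) \<Rightarrow> real" where
  "gap P \<gamma> \<mu>0 R dstar = (SUP r\<in>R. subopt P \<gamma> \<mu>0 r dstar)"

definition linf_dist :: "('x::finite \<Rightarrow> real) \<Rightarrow> ('x \<Rightarrow> real) \<Rightarrow> real" where
  "linf_dist x y = Max (range (\<lambda>i. \<bar>x i - y i\<bar>))"

definition hausdorff_dir :: "('x::finite \<Rightarrow> real) set \<Rightarrow> ('x \<Rightarrow> real) set \<Rightarrow> real" where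
  "hausdorff_dir A B = (SUP x\<in>A. INF y\<in>B. linf_dist x y)"

end

theory Submission imports Defs begin

lemma sum_fst_eq:
  fixes g :: "'s::finite \<times> 'a::finite \<Rightarrow> real"
  shows "(\<Sum>a\<in>UNIV. g (s, a)) = (\<Sum>x\<in>UNIV. if fst x = s then g x else 0)"
proof -
  have "(\<Sum>x\<in>UNIV. if fst x = s then g x else 0) = (\<Sum>x\<in>{x. fst x = s}. g x)"
    by (simp add: sum.inter_filter[symmetric])
  also have "{x::'s\<times>'a. fst x = s} = Pair s ` UNIV" by force
  also have "sum g (Pair s ` UNIV) = (\<Sum>a\<in>UNIV. g (s, a))"
    by (subst sum.reindex) (auto simp: inj_on_def)
  finally show ?thesis by simp
qed

lemma mass:
  fixes P :: "'s::finite \<times> 'a::finite \<Rightarrow> 's \<Rightarrow> real"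
  assumes P_sum: "\<forall>sa. (\<Sum>s\<in>UNIV. P sa s) = 1" and mu_sum: "(\<Sum>s\<in>UNIV. \<mu>0 s) = 1"
    and g: "\<gamma> < 1" and d: "\<forall>s. flow_op P \<gamma> d s = (1 - \<gamma>) * \<mu>0 s"
  shows "(\<Sum>x\<in>UNIV. d x) = 1"
proof -
  have "(\<Sum>s\<in>UNIV. flow_op P \<gamma> d s) = (\<Sum>s\<in>UNIV. (1 - \<gamma>) * \<mu>0 s)" using d by simp
  also have "\<dots> = 1 - \<gamma>" using mu_sum by (simp add: sum_distrib_left[symmetric])
  finally have e: "(\<Sum>s\<in>UNIV. flow_op P \<gamma> d s) = 1 - \<gamma>" .
  have s1: "(\<Sum>s\<in>UNIV. \<Sum>a\<in>UNIV. d (s, a)) = (\<Sum>x\<in>UNIV. d x)"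
    by (simp add: sum.cartesian_product)
  have "(\<Sum>s\<in>UNIV. \<Sum>sa'\<in>UNIV. P sa' s * d sa') = (\<Sum>sa'\<in>UNIV. \<Sum>s\<in>UNIV. P sa' s * d sa')"
    by (rule sum.swap)
  also have "\<dots> = (\<Sum>sa'\<in>UNIV. d sa')" using P_sum by (simp only: sum_distrib_right[symmetric]) simp
  finally have s2: "(\<Sum>s\<in>UNIV. \<Sum>sa'\<in>UNIV. P sa' s * d sa') = (\<Sum>x\<in>UNIV. d x)" .
  have "(\<Sum>s\<in>UNIV. flow_op P \<gamma> d s) = (1 - \<gamma>) * (\<Sum>x\<in>UNIV. d x)"
    unfolding flow_op_def sum_subtractf s1 sum_distrib_left[symmetric] s2 by (simp add: algebra_simps)
  with e g show ?thesis by simp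
qed

definition Avec :: "('s \<times> 'a \<Rightarrow> 's \<Rightarrow> real) \<Rightarrow> real \<Rightarrow> 's \<Rightarrow> real ^ ('s::finite \<times> 'a::finite)" where
  "Avec P \<gamma> s = (\<chi> x. (if fst x = s then 1 else 0) - \<gamma> * P x s)"

lemma flow_inner: "flow_op P \<gamma> (($) v) s = Avec P \<gamma> s \<bullet> v"
proof -
  have "(\<Sum>i\<in>UNIV. ((if fst i = s then 1 else 0) - \<gamma> * P i s) * v $ i)
     = (\<Sum>i\<in>UNIV. (if fst i = s then v $ i else 0)) - (\<Sum>i\<in>UNIV. \<gamma> * (P i s * v $ i))"
    by (simp add: sum_subtractf[symmetric] left_diff_distrib) (intro sum.cong, auto)
  then show ?thesis unfolding flow_op_def Avec_def inner_vec_def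
    by (simp add: sum_fst_eq[of "($) v"] sum_distrib_left)
qed

lemma ret_inner: "ret r d = (\<chi> i. r i) \<bullet> (\<chi> i. d i)"
  by (simp add: ret_def inner_vec_def)

lemma sup_hull:
  fixes a :: "'e::euclidean_space"
  assumes "finite V" "V \<noteq> {}"
  shows "(SUP w\<in>convex hull V. a \<bullet> w) = Max ((\<lambda>w. a \<bullet> w) ` V)"
    and "\<And>y. y \<in> convex hull V \<Longrightarrow> a \<bullet> y \<le> Max ((\<lambda>w. a \<bullet> w) ` V)"
    and "\<exists>w\<in>V. a \<bullet> w = Max ((\<lambda>w. a \<bullet> w) ` V)"
proof -
  let ?M = "Max ((\<lambda>w. a \<bullet> w) ` V)"
  have sub: "convex hull V \<subseteq> {x. a \<bullet> x \<le> ?M}"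
    by (rule hull_minimal) (use assms in \<open>auto simp: convex_halfspace_le\<close>)
  then show ub: "\<And>y. y \<in> convex hull V \<Longrightarrow> a \<bullet> y \<le> ?M" by auto
  show ex: "\<exists>w\<in>V. a \<bullet> w = ?M"
    using Max_in[of "(\<lambda>w. a \<bullet> w) ` V"] assms by (metis (no_types, lifting) finite_imageI image_iff image_is_empty)
  then obtain w where "w \<in> V" "a \<bullet> w = ?M" by blast
  then show "(SUP w\<in>convex hull V. a \<bullet> w) = ?M"
  proof (intro cSup_eq_maximum)
    show "?M \<in> (\<lambda>w. a \<bullet> w) ` (convex hull V)"
      using \<open>w \<in> V\<close> \<open>a \<bullet> w = ?M\<close> by (metis hull_inc image_eqI)
  qed (auto intro: ub)
qed

lemma core:
  fixes U :: "'e::euclidean_space set"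
  assumes fin: "finite U" and nn: "\<forall>u\<in>U. 0 \<le> a \<bullet> u"
    and z0: "z0 \<in> convex hull U" "a \<bullet> z0 = 0"
  shows "\<exists>C>0. \<forall>x\<in>convex hull U. \<exists>z\<in>convex hull U. a \<bullet> z = 0 \<and> norm (x - z) \<le> C * (a \<bullet> x)"
proof -
  define Pp where "Pp = {u\<in>U. 0 < a \<bullet> u}"
  have finP: "finite Pp" using fin Pp_def by auto
  define m where "m = (if Pp = {} then 1 else Min ((\<lambda>u. a \<bullet> u) ` Pp))"
  have mpos: "m > 0" using finP by (auto simp: m_def Pp_def)
  have mle: "\<And>u. u \<in> Pp \<Longrightarrow> m \<le> a \<bullet> u" using finP by (auto simp: m_def)
  define D where "D = Max (insert 0 ((\<lambda>u. norm (u - z0)) ` U))"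
  have D0: "0 \<le> D" using fin by (auto simp: D_def)
  have Dle: "\<And>u. u \<in> U \<Longrightarrow> norm (u - z0) \<le> D" using fin by (auto simp: D_def)
  define C where "C = (D + 1) / m"
  have Cpos: "C > 0" using mpos D0 by (simp add: C_def)
  have "\<forall>x\<in>convex hull U. \<exists>z\<in>convex hull U. a \<bullet> z = 0 \<and> norm (x - z) \<le> C * (a \<bullet> x)"
  proof
    fix x assume "x \<in> convex hull U"
    then obtain l where l0: "\<forall>u\<in>U. 0 \<le> l u" and l1: "sum l U = 1" and lx: "(\<Sum>u\<in>U. l u *\<^sub>R u) = x"
      using convex_hull_finite[OF fin] by auto
    define y where "y u = (if u \<in> Pp then z0 else u)" for u
    define z where "z = (\<Sum>u\<in>U. l u *\<^sub>R y u)"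
    have zin: "z \<in> convex hull U" unfolding z_def
      by (rule convex_sum[OF fin convex_convex_hull l1]) (use l0 z0 in \<open>auto simp: y_def hull_inc\<close>)
    have ay: "\<And>u. u \<in> U \<Longrightarrow> a \<bullet> y u = 0" using nn z0 by (force simp: y_def Pp_def)
    have az: "a \<bullet> z = 0" unfolding z_def by (simp add: inner_sum_right ay)
    define s where "s = (\<Sum>u\<in>U. l u * (if u \<in> Pp then 1 else 0))"
    have s0: "0 \<le> s" unfolding s_def using l0 by (intro sum_nonneg) auto
    have "x - z = (\<Sum>u\<in>U. l u *\<^sub>R (u - y u))"
      by (simp add: lx[symmetric] z_def scaleR_diff_right sum_subtractf)
    then have "norm (x - z) \<le> (\<Sum>u\<in>U. norm (l u *\<^sub>R (u - y u)))"
      by (metis norm_sum)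
    also have "\<dots> \<le> (\<Sum>u\<in>U. l u * (if u \<in> Pp then D else 0))"
      using l0 Dle by (intro sum_mono) (auto simp: y_def intro: mult_left_mono)
    also have "\<dots> = D * s" unfolding s_def by (simp add: sum_distrib_left) (intro sum.cong, auto)
    finally have n1: "norm (x - z) \<le> D * s" .
    have "m * s = (\<Sum>u\<in>U. l u * (if u \<in> Pp then m else 0))"
      unfolding s_def by (simp add: sum_distrib_left) (intro sum.cong, auto)
    also have "\<dots> \<le> (\<Sum>u\<in>U. l u * (a \<bullet> u))"
      using l0 mle nn by (intro sum_mono) (auto intro: mult_left_mono)
    also have "\<dots> = a \<bullet> x" by (simp add: lx[symmetric] inner_sum_right)
    finally have ax: "m * s \<le> a \<bullet> x" .
    have "D * s \<le> (D + 1) * s" using s0 by (simp add: mult_right_mono)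
    also have "\<dots> = C * (m * s)" using mpos by (simp add: C_def)
    also have "\<dots> \<le> C * (a \<bullet> x)" using ax Cpos by (simp add: mult_left_mono)
    finally show "\<exists>z\<in>convex hull U. a \<bullet> z = 0 \<and> norm (x - z) \<le> C * (a \<bullet> x)"
      using zin az n1 by auto
  qed
  then show ?thesis using Cpos by blast
qed


lemma linf_nonneg: "0 \<le> linf_dist (x::'x::finite \<Rightarrow> real) y"
proof -
  obtain i :: 'x where True by simp
  have "\<bar>x i - y i\<bar> \<le> Max (range (\<lambda>i. \<bar>x i - y i\<bar>))" by (rule Max_ge) auto
  then show ?thesis unfolding linf_dist_def by (meson abs_ge_zero order_trans)
qed

lemma diff_inner_swap: "(w - d) \<bullet> (v::'e::real_inner) = v \<bullet> w - v \<bullet> d"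
  by (metis inner_diff_left inner_commute)

lemma one_inner_vec: "(1::real^'n) \<bullet> v = (\<Sum>i\<in>UNIV. v $ i)"
  by (simp add: inner_vec_def)

theorem mainTheorem6:
  fixes P :: "'s::finite \<times> 'a::finite \<Rightarrow> 's \<Rightarrow> real"
    and \<mu>0 :: "'s \<Rightarrow> real" and \<gamma> :: real
    and dstar :: "'s \<times> 'a \<Rightarrow> real"
  assumes P_nonneg: "\<forall>sa s. 0 \<le> P sa s"
    and P_sum: "\<forall>sa. (\<Sum>s\<in>UNIV. P sa s) = 1"
    and mu_nonneg: "\<forall>s. 0 \<le> \<mu>0 s"
    and mu_sum: "(\<Sum>s\<in>UNIV. \<mu>0 s) = 1"
    and gamma: "0 < \<gamma>" "\<gamma> < 1"
    and dstar: "dstar \<in> occupancy_set P \<gamma> \<mu>0"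
  shows "\<exists>C>0. \<forall>(K::nat) (de :: nat \<Rightarrow> ('s \<times> 'a \<Rightarrow> real)) (eps :: nat \<Rightarrow> real).
            (\<forall>k\<in>{1..K}. de k \<in> occupancy_set P \<gamma> \<mu>0 \<and> 0 \<le> eps k)
            \<and> reward_set_data P \<gamma> \<mu>0 K de eps \<noteq> {}
            \<longrightarrow> hausdorff_dir (reward_set_data P \<gamma> \<mu>0 K de eps) (reward_set_expert P \<gamma> \<mu>0 dstar)
                \<le> C * gap P \<gamma> \<mu>0 (reward_set_data P \<gamma> \<mu>0 K de eps) dstar"
proof -
  define Phi where "Phi = occupancy_set P \<gamma> \<mu>0"
  define Phiv :: "(real^('s\<times>'a)) set" where "Phiv = vec_lambda ` Phi"
  have nth_lam: "\<And>d::'s\<times>'a \<Rightarrow> real. ($) (vec_lambda d) = d" by (rule ext) simp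
  have char: "Phiv = {v. (\<forall>x. 0 \<le> v $ x) \<and> (\<forall>s. Avec P \<gamma> s \<bullet> v = (1 - \<gamma>) * \<mu>0 s)}"
  proof (intro set_eqI iffI)
    fix v assume "v \<in> Phiv"
    then obtain d where "d \<in> Phi" "v = vec_lambda d" by (auto simp: Phiv_def)
    then show "v \<in> {v. (\<forall>x. 0 \<le> v $ x) \<and> (\<forall>s. Avec P \<gamma> s \<bullet> v = (1 - \<gamma>) * \<mu>0 s)}"
      using flow_inner[of P \<gamma> v] by (auto simp: Phi_def occupancy_set_def nth_lam)
  next
    fix v assume v: "v \<in> {v. (\<forall>x. 0 \<le> v $ x) \<and> (\<forall>s. Avec P \<gamma> s \<bullet> v = (1 - \<gamma>) * \<mu>0 s)}"
    have "($) v \<in> Phi" using v flow_inner[of P \<gamma> v] by (auto simp: Phi_def occupancy_set_def)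
    then show "v \<in> Phiv" unfolding Phiv_def by (metis image_eqI vec_lambda_eta)
  qed
  have massv: "\<And>v. v \<in> Phiv \<Longrightarrow> (\<Sum>x\<in>UNIV. v $ x) = 1"
  proof -
    fix v assume "v \<in> Phiv"
    then have "\<forall>s. flow_op P \<gamma> (($) v) s = (1 - \<gamma>) * \<mu>0 s" by (simp add: char flow_inner)
    then show "(\<Sum>x\<in>UNIV. v $ x) = 1" using mass[OF P_sum mu_sum gamma(2)] by blast
  qed
  have nnv: "\<And>v x. v \<in> Phiv \<Longrightarrow> 0 \<le> v $ x" by (auto simp: char)
  have le1v: "\<And>v x. v \<in> Phiv \<Longrightarrow> v $ x \<le> 1"
  proof -
    fix v x assume v: "v \<in> Phiv"
    have "v $ x \<le> (\<Sum>x\<in>UNIV. v $ x)" by (rule member_le_sum) (use nnv v in auto)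
    then show "v $ x \<le> 1" using massv v by simp
  qed
  have "polyhedron Phiv"
  proof -
    have "Phiv = \<Inter> (range (\<lambda>x. {v. axis x 1 \<bullet> v \<ge> (0::real)}) \<union> range (\<lambda>s. {v. Avec P \<gamma> s \<bullet> v = (1 - \<gamma>) * \<mu>0 s}))"
      by (auto simp: char inner_axis')
    moreover have "polyhedron (\<Inter> (range (\<lambda>x. {v. axis x 1 \<bullet> v \<ge> (0::real)}) \<union> range (\<lambda>s. {v. Avec P \<gamma> s \<bullet> v = (1 - \<gamma>) * \<mu>0 s})))"
      by (intro polyhedron_Inter) (auto intro: polyhedron_halfspace_ge polyhedron_hyperplane)
    ultimately show ?thesis by simp
  qed
  moreover have "bounded Phiv"
    by (rule bounded_subset[OF bounded_cbox[of 0 1]]) (auto simp: mem_box_cart nnv le1v)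
  ultimately have "polytope Phiv" by (simp add: polytope_eq_bounded_polyhedron)
  then obtain V where finV: "finite V" and PhivV: "Phiv = convex hull V" by (auto simp: polytope_def)
  define ds where "ds = vec_lambda dstar"
  have ds: "ds \<in> Phiv" using dstar by (auto simp: ds_def Phiv_def Phi_def)
  have Vne: "V \<noteq> {}" using ds PhivV by auto
  have VPhiv: "\<And>w. w \<in> V \<Longrightarrow> w \<in> Phiv" using PhivV by (auto intro: hull_inc)
  define M where "M a = Max ((\<lambda>w. a \<bullet> w) ` V)" for a :: "real^('s\<times>'a)"
  have Mub: "\<And>a y. y \<in> Phiv \<Longrightarrow> a \<bullet> y \<le> M a" unfolding M_def PhivV using sup_hull(2)[OF finV Vne] by blast
  have Mex: "\<And>a. \<exists>w\<in>V. a \<bullet> w = M a" unfolding M_def using sup_hull(3)[OF finV Vne] by blast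
  have subopt_eq: "\<And>r d. subopt P \<gamma> \<mu>0 r d = M (vec_lambda r) - vec_lambda r \<bullet> vec_lambda d"
  proof -
    fix r d :: "'s\<times>'a \<Rightarrow> real"
    have "(SUP d'\<in>Phi. ret r d') = (SUP w\<in>Phiv. vec_lambda r \<bullet> w)"
      unfolding Phiv_def ret_inner by (simp add: image_image)
    also have "\<dots> = M (vec_lambda r)" unfolding PhivV M_def by (rule sup_hull(1)[OF finV Vne])
    finally show "subopt P \<gamma> \<mu>0 r d = M (vec_lambda r) - vec_lambda r \<bullet> vec_lambda d"
      unfolding subopt_def Phi_def[symmetric] ret_inner by simp
  qed
  define G :: "((real^('s\<times>'a)) \<times> real) set" where
    "G = {p. (\<forall>x. 0 \<le> fst p $ x) \<and> (\<Sum>x\<in>UNIV. fst p $ x) = 1 \<and> (\<forall>w\<in>V. (w - ds) \<bullet> fst p \<le> snd p) \<and> snd p \<le> 1}"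
  have Gsnd: "\<And>p. p \<in> G \<Longrightarrow> 0 \<le> snd p"
  proof -
    fix p assume p: "p \<in> G"
    obtain w where w: "w \<in> V" "fst p \<bullet> w = M (fst p)" using Mex by blast
    have "fst p \<bullet> ds \<le> M (fst p)" by (rule Mub[OF ds])
    then have "0 \<le> (w - ds) \<bullet> fst p" using w by (simp add: diff_inner_swap)
    then show "0 \<le> snd p" using p w by (auto simp: G_def)
  qed
  have "polyhedron G"
  proof -
    define H :: "((real^('s\<times>'a)) \<times> real) set" where "H = (\<Inter>x. {p. (axis x 1, 0) \<bullet> p \<ge> (0::real)}) \<inter> {p. (1, 0) \<bullet> p = (1::real)}
       \<inter> (\<Inter>w\<in>V. {p. (w - ds, -1) \<bullet> p \<le> (0::real)}) \<inter> {p. (0, 1) \<bullet> p \<le> (1::real)}"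
    have "G = H"
      apply (rule set_eqI)
      subgoal for p by (cases p) (auto simp: H_def G_def inner_axis' one_inner_vec diff_inner_swap)
      done
    moreover have "polyhedron H" unfolding H_def
      using finV by (intro polyhedron_Int polyhedron_Inter) (auto intro: polyhedron_halfspace_ge polyhedron_hyperplane polyhedron_halfspace_le)
    ultimately show ?thesis by simp
  qed
  moreover have "bounded G"
  proof (rule bounded_subset[OF bounded_Times[OF bounded_cbox[of 0 1] bounded_cbox[of 0 1]]])
    show "G \<subseteq> cbox (0::real^('s\<times>'a)) 1 \<times> cbox (0::real) 1"
    proof
      fix p assume p: "p \<in> G"
      have "\<And>x. fst p $ x \<le> 1"
      proof -
        fix x
        have "fst p $ x \<le> (\<Sum>x\<in>UNIV. fst p $ x)" by (rule member_le_sum) (use p in \<open>auto simp: G_def\<close>)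
        then show "fst p $ x \<le> 1" using p by (simp add: G_def)
      qed
      then show "p \<in> cbox 0 1 \<times> cbox 0 1" using p Gsnd[OF p]
        by (cases p) (auto simp: mem_box_cart G_def)
    qed
  qed
  ultimately have "polytope G" by (simp add: polytope_eq_bounded_polyhedron)
  then obtain U where finU: "finite U" and GU: "G = convex hull U" by (auto simp: polytope_def)
  define c where "c = real CARD('s\<times>'a)"
  have cpos: "c > 0" by (simp add: c_def)
  define z0 where "z0 = ((\<chi> i. 1 / c) :: real^('s\<times>'a), 0::real)"
  have z0G: "z0 \<in> G"
  proof -
    have "\<And>w. w \<in> V \<Longrightarrow> (w - ds) \<bullet> (\<chi> i. 1 / c) = 0"
    proof -
      fix w assume "w \<in> V"
      then have "(\<Sum>i\<in>UNIV. w $ i) = 1" "(\<Sum>i\<in>UNIV. ds $ i) = 1" using VPhiv massv ds by auto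
      then show "(w - ds) \<bullet> (\<chi> i. 1 / c) = 0"
        by (simp add: inner_vec_def sum_subtractf left_diff_distrib sum_divide_distrib[symmetric])
    qed
    moreover have "(\<Sum>x\<in>(UNIV::('s\<times>'a) set). 1 / c) = 1" using cpos by (simp add: c_def)
    ultimately show ?thesis using cpos by (auto simp: z0_def G_def)
  qed
  have "\<exists>C>0. \<forall>x\<in>convex hull U. \<exists>z\<in>convex hull U. (0, 1) \<bullet> z = 0 \<and> norm (x - z) \<le> C * ((0::real^('s\<times>'a), 1::real) \<bullet> x)"
  proof (rule core[OF finU])
    show "\<forall>u\<in>U. 0 \<le> (0, 1) \<bullet> u"
    proof
      fix u assume "u \<in> U"
      then have "u \<in> G" using GU by (simp add: hull_inc)
      then have "0 \<le> snd u" by (rule Gsnd)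
      then show "0 \<le> (0, 1) \<bullet> u" by (cases u) simp
    qed
    show "z0 \<in> convex hull U" using z0G GU by simp
    show "(0, 1) \<bullet> z0 = 0" by (simp add: z0_def)
  qed
  then obtain C where Cpos: "C > 0" and key0: "\<forall>x\<in>G. \<exists>z\<in>G. (0, 1) \<bullet> z = 0 \<and> norm (x - z) \<le> C * ((0::real^('s\<times>'a), 1::real) \<bullet> x)"
    using GU by auto
  have key: "\<And>x. x \<in> G \<Longrightarrow> \<exists>z\<in>G. snd z = 0 \<and> norm (x - z) \<le> C * snd x"
  proof -
    fix x assume "x \<in> G"
    then obtain z where "z \<in> G" "(0, 1) \<bullet> z = 0" "norm (x - z) \<le> C * ((0::real^('s\<times>'a), 1::real) \<bullet> x)"
      using key0 by blast
    moreover have "(0, 1) \<bullet> z = snd z" "(0::real^('s\<times>'a), 1::real) \<bullet> x = snd x"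
      by (cases z, simp) (cases x, simp)
    ultimately show "\<exists>z\<in>G. snd z = 0 \<and> norm (x - z) \<le> C * snd x"
      by metis
  qed
  have claim: "\<And>r. r \<in> reward_simplex \<Longrightarrow> (\<exists>r'\<in>reward_set_expert P \<gamma> \<mu>0 dstar. linf_dist r r' \<le> C * subopt P \<gamma> \<mu>0 r dstar) \<and> subopt P \<gamma> \<mu>0 r dstar \<le> 1"
  proof -
    fix r :: "'s\<times>'a \<Rightarrow> real" assume r: "r \<in> reward_simplex"
    define vr where "vr = vec_lambda r"
    define f where "f = M vr - vr \<bullet> ds"
    have sf: "subopt P \<gamma> \<mu>0 r dstar = f" by (simp add: subopt_eq f_def vr_def ds_def)
    have rn: "\<forall>x. 0 \<le> r x" "(\<Sum>x\<in>UNIV. r x) = 1" using r by (auto simp: reward_simplex_def)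
    have f1: "f \<le> 1"
    proof -
      obtain w where w: "w \<in> V" "vr \<bullet> w = M vr" using Mex by blast
      have "vr \<bullet> w = (\<Sum>i\<in>UNIV. r i * w $ i)" by (simp add: vr_def inner_vec_def)
      also have "\<dots> \<le> (\<Sum>i\<in>UNIV. r i * 1)"
        using rn le1v VPhiv w(1) by (intro sum_mono mult_left_mono) auto
      finally have a: "M vr \<le> 1" using w rn by simp
      have "0 \<le> vr \<bullet> ds" unfolding vr_def inner_vec_def using rn nnv ds by (auto intro!: sum_nonneg)
      then show ?thesis using a by (simp add: f_def)
    qed
    have xG: "(vr, f) \<in> G"
    proof -
      have "\<And>w. w \<in> V \<Longrightarrow> (w - ds) \<bullet> vr \<le> f"
        using Mub VPhiv by (auto simp: f_def diff_inner_swap)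
      then show ?thesis using rn f1 by (auto simp: G_def vr_def)
    qed
    then obtain z where zG: "z \<in> G" and z0: "snd z = 0" and zn: "norm ((vr, f) - z) \<le> C * f"
      using key by fastforce
    define v' where "v' = fst z"
    define r' where "r' = ($) v'"
    have r'v: "vec_lambda r' = v'" by (simp add: r'_def vec_lambda_eta)
    have r'S: "r' \<in> reward_simplex" using zG by (auto simp: reward_simplex_def G_def r'_def v'_def)
    have "subopt P \<gamma> \<mu>0 r' dstar = M v' - v' \<bullet> ds" by (simp add: subopt_eq r'v ds_def)
    moreover have "M v' \<le> v' \<bullet> ds"
    proof -
      obtain w where w: "w \<in> V" "v' \<bullet> w = M v'" using Mex by blast
      have "(w - ds) \<bullet> v' \<le> 0" using zG z0 w by (auto simp: G_def v'_def)
      then show ?thesis using w by (simp add: diff_inner_swap)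
    qed
    moreover have "v' \<bullet> ds \<le> M v'" by (rule Mub[OF ds])
    ultimately have "subopt P \<gamma> \<mu>0 r' dstar = 0" by simp
    then have r'E: "r' \<in> reward_set_expert P \<gamma> \<mu>0 dstar" using r'S by (simp add: reward_set_expert_def)
    have "norm (vr - v') \<le> norm ((vr, f) - z)"
    proof -
      have "(vr, f) - z = (vr - v', f - snd z)" by (cases z) (simp add: v'_def)
      then show ?thesis by (simp add: norm_fst_le)
    qed
    have "linf_dist r r' \<le> norm (vr - v')"
      unfolding linf_dist_def
    proof (rule Max.boundedI)
      show "\<And>a. a \<in> range (\<lambda>i. \<bar>r i - r' i\<bar>) \<Longrightarrow> a \<le> norm (vr - v')"
        using component_le_norm_cart[of "vr - v'"] by (auto simp: vr_def r'_def)
    qed auto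
    then have "linf_dist r r' \<le> C * f" using zn \<open>norm (vr - v') \<le> norm ((vr, f) - z)\<close> by linarith
    then show "(\<exists>r'\<in>reward_set_expert P \<gamma> \<mu>0 dstar. linf_dist r r' \<le> C * subopt P \<gamma> \<mu>0 r dstar) \<and> subopt P \<gamma> \<mu>0 r dstar \<le> 1"
      using r'E sf f1 by auto
  qed
  show ?thesis
  proof (intro exI[of _ C] conjI allI impI Cpos)
    fix K :: nat and de :: "nat \<Rightarrow> ('s \<times> 'a \<Rightarrow> real)" and eps :: "nat \<Rightarrow> real"
    assume h: "(\<forall>k\<in>{1..K}. de k \<in> occupancy_set P \<gamma> \<mu>0 \<and> 0 \<le> eps k) \<and> reward_set_data P \<gamma> \<mu>0 K de eps \<noteq> {}"
    define A where "A = reward_set_data P \<gamma> \<mu>0 K de eps"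
    define B where "B = reward_set_expert P \<gamma> \<mu>0 dstar"
    have Ane: "A \<noteq> {}" using h by (simp add: A_def)
    have AS: "\<And>x. x \<in> A \<Longrightarrow> x \<in> reward_simplex" by (auto simp: A_def reward_set_data_def)
    have bdd: "bdd_above ((\<lambda>r. subopt P \<gamma> \<mu>0 r dstar) ` A)"
      using claim AS by (intro bdd_aboveI[of _ 1]) auto
    have "(SUP x\<in>A. INF y\<in>B. linf_dist x y) \<le> C * (SUP r\<in>A. subopt P \<gamma> \<mu>0 r dstar)"
    proof (rule cSUP_least[OF Ane])
      fix x assume x: "x \<in> A"
      then obtain r' where r': "r' \<in> B" "linf_dist x r' \<le> C * subopt P \<gamma> \<mu>0 x dstar"
        using claim AS unfolding B_def by blast
      have "(INF y\<in>B. linf_dist x y) \<le> linf_dist x r'"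
        by (rule cINF_lower[OF _ r'(1)]) (auto intro: bdd_belowI[of _ 0] linf_nonneg)
      also have "\<dots> \<le> C * subopt P \<gamma> \<mu>0 x dstar" by (rule r'(2))
      also have "\<dots> \<le> C * (SUP r\<in>A. subopt P \<gamma> \<mu>0 r dstar)"
        using Cpos cSUP_upper[OF x bdd] by (simp add: mult_left_mono)
      finally show "(INF y\<in>B. linf_dist x y) \<le> C * (SUP r\<in>A. subopt P \<gamma> \<mu>0 r dstar)" .
    qed
    then show "hausdorff_dir (reward_set_data P \<gamma> \<mu>0 K de eps) (reward_set_expert P \<gamma> \<mu>0 dstar)
                \<le> C * gap P \<gamma> \<mu>0 (reward_set_data P \<gamma> \<mu>0 K de eps) dstar"
      by (simp add: hausdorff_dir_def gap_def A_def B_def)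
  qed
qed

end
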